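(* Let $H$ be a nonempty ASC-hypergraph and $M\subseteq H$. Then $M$ is a construct of $H$ if and only if every $M$-antichain misses $H$ and $\bigcup H\in M$.
   Context: A hypergraph is a finite set $H$ of nonempty subsets of some finite set; its carrier is $\bigcup H$. For a family $F$ and set $Y$, $F_Y=\{X\in F\mid X\subseteq Y\}$. A hypergraph partition of $H$ is a partition $\{H_1,\dots,H_n\}$ ($n\ge0$) of the set $H$ with $\{\bigcup H_1,\dots,\bigcup H_n\}$ a partition of $\bigcup H$; $H$ is connected if it has exactly one hypergraph partition; the finest hypergraph partition is the unique one whose blocks are connected. $H$ is atomic if $\{x\}\in H$ for all $x\in\bigcup H$; saturated if $X_1,X_2\in H$ with $X_1\cap X_2\neq\emptyset$ imply $X_1\cup X_2\in H$. An ASC-hypergraph is one that is atomic, saturated and connected. Constructions of an atomic $H$, by induction on $|\bigcup H|$: (0) $\emptyset$ is the only construction of $\emptyset$; (1) if $|\bigcup H|\ge1$, $H$ connected, $x\in\bigcup H$, $K$ a construction of $H_{\bigcup H\setminus\{x\}}$, then $K\cup\{\bigcup H\}$ is a construction of $H$; (2) if $H$ is not connected with finest hypergraph partition $\{H_1,\dots,H_n\}$, $n\ge2$, and $K_i$ is a construction of $H_i$, then $K_1\cup\dots\cup K_n$ is a construction of $H$. A construct of a connected nonempty atomic $H$ is a subset of some construction of $H$ that contains $\bigcup H$. For $M\subseteq H$, an $M$-antichain is a subset $S\subseteq M$ with $|S|\ge2$ such that no member of $S$ is a subset of another member of $S$; it misses $H$ when $\bigcup S\notin H$. *)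

theory Defs
  imports Main
begin

definition hypergraph :: "'a set set \<Rightarrow> bool" where
  "hypergraph H \<longleftrightarrow> finite H \<and> (\<forall>X\<in>H. X \<noteq> {} \<and> finite X)"

definition restr :: "'a set set \<Rightarrow> 'a set \<Rightarrow> 'a set set" where
  "restr F Y = {X \<in> F. X \<subseteq> Y}"

definition hyp_partition :: "'a set set \<Rightarrow> 'a set set set \<Rightarrow> bool" where
  "hyp_partition H P \<longleftrightarrow>
     (\<forall>B\<in>P. B \<noteq> {}) \<and> \<Union>P = H \<and>
     (\<forall>B1\<in>P. \<forall>B2\<in>P. B1 \<noteq> B2 \<longrightarrow> B1 \<inter> B2 = {}) \<and>
     (\<forall>B\<in>P. \<Union>B \<noteq> {}) \<and>
     (\<forall>B1\<in>P. \<forall>B2\<in>P. B1 \<noteq> B2 \<longrightarrow> \<Union>B1 \<inter> \<Union>B2 = {})"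

definition connected_hg :: "'a set set \<Rightarrow> bool" where
  "connected_hg H \<longleftrightarrow> (\<exists>!P. hyp_partition H P)"

definition atomic :: "'a set set \<Rightarrow> bool" where
  "atomic H \<longleftrightarrow> (\<forall>x\<in>\<Union>H. {x} \<in> H)"

definition saturated :: "'a set set \<Rightarrow> bool" where
  "saturated H \<longleftrightarrow> (\<forall>X1\<in>H. \<forall>X2\<in>H. X1 \<inter> X2 \<noteq> {} \<longrightarrow> X1 \<union> X2 \<in> H)"

definition ASC :: "'a set set \<Rightarrow> bool" where
  "ASC H \<longleftrightarrow> atomic H \<and> saturated H \<and> connected_hg H"

(* constructions of an atomic hypergraph H; rule (2) uses the finest hypergraph
   partition P, i.e. the hypergraph partition all of whose blocks are connected *)
inductive construction :: "'a set set \<Rightarrow> 'a set set \<Rightarrow> bool" where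
  empty: "construction {} {}"
| conn: "\<lbrakk> hypergraph H; atomic H; \<Union>H \<noteq> {}; connected_hg H; x \<in> \<Union>H;
           construction (restr H (\<Union>H - {x})) K \<rbrakk>
         \<Longrightarrow> construction H (insert (\<Union>H) K)"
| disconn: "\<lbrakk> hypergraph H; atomic H; \<not> connected_hg H; hyp_partition H P;
              \<forall>B\<in>P. connected_hg B; 2 \<le> card P;
              \<forall>B\<in>P. construction B (f B) \<rbrakk>
         \<Longrightarrow> construction H (\<Union>B\<in>P. f B)"

definition construct :: "'a set set \<Rightarrow> 'a set set \<Rightarrow> bool" where
  "construct H M \<longleftrightarrow> (\<exists>K. construction H K \<and> M \<subseteq> K) \<and> \<Union>H \<in> M"

definition antichain :: "'a set set \<Rightarrow> 'a set set \<Rightarrow> bool" where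
  "antichain M S \<longleftrightarrow> S \<subseteq> M \<and> 2 \<le> card S \<and>
     (\<forall>X\<in>S. \<forall>Y\<in>S. X \<subseteq> Y \<longrightarrow> X = Y)"

definition misses :: "'a set set \<Rightarrow> 'a set set \<Rightarrow> bool" where
  "misses H S \<longleftrightarrow> \<Union>S \<notin> H"

end

theory Submission
  imports Defs
begin

definition nested :: "'a set set \<Rightarrow> 'a set set \<Rightarrow> bool" where
  "nested H K \<longleftrightarrow> (\<forall>S. antichain K S \<longrightarrow> misses H S)"

lemma hg_sub: "hypergraph H \<Longrightarrow> B \<subseteq> H \<Longrightarrow> hypergraph B"
  unfolding hypergraph_def by (auto intro: finite_subset)

lemma hg_union_finite: "hypergraph H \<Longrightarrow> finite (\<Union>H)"
  unfolding hypergraph_def by auto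

lemma restr_sub: "restr H Y \<subseteq> H" unfolding restr_def by auto

lemma restr_atomic: "atomic H \<Longrightarrow> atomic (restr H Y)"
  unfolding atomic_def restr_def by auto

lemma restr_saturated: "saturated H \<Longrightarrow> saturated (restr H Y)"
  unfolding saturated_def restr_def by auto

lemma hp_ne: "hyp_partition H P \<Longrightarrow> B \<in> P \<Longrightarrow> B \<noteq> {}"
  unfolding hyp_partition_def by simp
lemma hp_Un: "hyp_partition H P \<Longrightarrow> \<Union>P = H"
  unfolding hyp_partition_def by simp
lemma hp_disj: "hyp_partition H P \<Longrightarrow> B1 \<in> P \<Longrightarrow> B2 \<in> P \<Longrightarrow> B1 \<noteq> B2 \<Longrightarrow> B1 \<inter> B2 = {}"
  unfolding hyp_partition_def by simp
lemma hp_une: "hyp_partition H P \<Longrightarrow> B \<in> P \<Longrightarrow> \<Union>B \<noteq> {}"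
  unfolding hyp_partition_def by simp
lemma hp_udisj: "hyp_partition H P \<Longrightarrow> B1 \<in> P \<Longrightarrow> B2 \<in> P \<Longrightarrow> B1 \<noteq> B2 \<Longrightarrow> \<Union>B1 \<inter> \<Union>B2 = {}"
  unfolding hyp_partition_def by simp

lemma block_sub: "hyp_partition H P \<Longrightarrow> B \<in> P \<Longrightarrow> B \<subseteq> H"
  unfolding hyp_partition_def by auto

lemma block_mem:
  assumes "hyp_partition H P" "B \<in> P" "X \<in> H" "X \<noteq> {}" "X \<subseteq> \<Union>B"
  shows "X \<in> B"
proof -
  from assms(3) hp_Un[OF assms(1)] obtain B' where B': "B' \<in> P" "X \<in> B'" by auto
  show ?thesis
  proof (cases "B' = B")
    case True then show ?thesis using B' by simp
  next
    case False
    then have "\<Union>B' \<inter> \<Union>B = {}" using hp_udisj[OF assms(1) B'(1) assms(2)] by blast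
    moreover have "X \<subseteq> \<Union>B'" using B' by auto
    ultimately show ?thesis using assms(4,5) by blast
  qed
qed

lemma block_atomic:
  assumes "hyp_partition H P" "B \<in> P" "atomic H"
  shows "atomic B"
  unfolding atomic_def
proof
  fix x assume x: "x \<in> \<Union>B"
  have "B \<subseteq> H" using block_sub assms by blast
  then have "{x} \<in> H" using x assms(3) unfolding atomic_def by blast
  then show "{x} \<in> B" using block_mem[OF assms(1,2)] x by blast
qed

lemma block_saturated:
  assumes "hyp_partition H P" "B \<in> P" "saturated H"
  shows "saturated B"
  unfolding saturated_def
proof (intro ballI impI)
  fix X1 X2 assume X: "X1 \<in> B" "X2 \<in> B" "X1 \<inter> X2 \<noteq> {}"
  have "B \<subseteq> H" using block_sub assms by blast
  then have "X1 \<union> X2 \<in> H" using X assms(3) unfolding saturated_def by blast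
  then show "X1 \<union> X2 \<in> B" using block_mem[OF assms(1,2)] X by blast
qed

lemma partition_single:
  assumes "hypergraph H" "H \<noteq> {}"
  shows "hyp_partition H {H}"
proof -
  have "\<Union>H \<noteq> {}" using assms unfolding hypergraph_def by auto
  then show ?thesis using assms(2) unfolding hyp_partition_def by auto
qed

lemma partition_empty: "hyp_partition {} P \<longleftrightarrow> P = {}"
  unfolding hyp_partition_def by auto

lemma connected_empty: "connected_hg {}"
  unfolding connected_hg_def partition_empty by auto

lemma conn_top:
  assumes hg: "hypergraph H" and at: "atomic H" and sat: "saturated H"
    and con: "connected_hg H" and ne: "H \<noteq> {}"
  shows "\<Union>H \<in> H"
proof (rule ccontr)
  assume nin: "\<Union>H \<notin> H"
  have fin: "finite H" using hg unfolding hypergraph_def by auto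
  obtain Y0 where "Y0 \<in> H" using ne by auto
  then obtain Y where Y: "Y \<in> H" "\<forall>Z\<in>H. Y \<subseteq> Z \<longrightarrow> Y = Z"
    using finite_has_maximal2[OF fin] by blast
  have "Y \<subseteq> \<Union>H" using Y by auto
  moreover have "Y \<noteq> \<Union>H" using Y nin by auto
  ultimately obtain x where x: "x \<in> \<Union>H" "x \<notin> Y" by blast
  have sx: "{x} \<in> H" using x at unfolding atomic_def by auto
  define A where "A = restr H Y"
  define C where "C = H - A"
  have YA: "Y \<in> A" using Y unfolding A_def restr_def by auto
  have xC: "{x} \<in> C" using sx x unfolding C_def A_def restr_def by auto
  have UA: "\<Union>A = Y" using YA unfolding A_def restr_def by auto
  have disj: "\<Union>C \<inter> Y = {}"
  proof (rule ccontr)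
    assume "\<Union>C \<inter> Y \<noteq> {}"
    then obtain Z where Z: "Z \<in> C" "Z \<inter> Y \<noteq> {}" by blast
    then have "Z \<in> H" "\<not> Z \<subseteq> Y" unfolding C_def A_def restr_def by auto
    then have "Z \<union> Y \<in> H" using sat Y Z unfolding saturated_def by blast
    then have "Y = Z \<union> Y" using Y(2) by blast
    then show False using \<open>\<not> Z \<subseteq> Y\<close> by blast
  qed
  have ne_mem: "\<forall>X\<in>H. X \<noteq> {}" using hg unfolding hypergraph_def by auto
  have AC: "A \<noteq> C" using YA unfolding C_def by auto
  have p2: "hyp_partition H {A, C}"
    unfolding hyp_partition_def
  proof (intro conjI)
    show "\<forall>B\<in>{A, C}. B \<noteq> {}" using YA xC by auto
    show "\<Union>{A, C} = H" unfolding C_def A_def restr_def by auto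
    show "\<forall>B1\<in>{A, C}. \<forall>B2\<in>{A, C}. B1 \<noteq> B2 \<longrightarrow> B1 \<inter> B2 = {}" unfolding C_def by auto
    show "\<forall>B\<in>{A, C}. \<Union>B \<noteq> {}"
    proof -
      have "Y \<noteq> {}" using Y(1) ne_mem by blast
      then have "\<Union>A \<noteq> {}" using YA by blast
      moreover have "\<Union>C \<noteq> {}" using xC by blast
      ultimately show ?thesis by simp
    qed
    show "\<forall>B1\<in>{A, C}. \<forall>B2\<in>{A, C}. B1 \<noteq> B2 \<longrightarrow> \<Union>B1 \<inter> \<Union>B2 = {}"
      using disj UA by auto
  qed
  have p1: "hyp_partition H {H}" using partition_single hg ne by blast
  have "{A, C} \<noteq> {H}" using AC by (metis doubleton_eq_iff insert_absorb2)
  then show False using con p1 p2 unfolding connected_hg_def by blast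
qed

lemma finest_exists:
  "hypergraph H \<Longrightarrow> \<exists>P. hyp_partition H P \<and> (\<forall>B\<in>P. connected_hg B)"
proof (induction "card H" arbitrary: H rule: less_induct)
  case less
  show ?case
  proof (cases "connected_hg H")
    case True
    show ?thesis
    proof (cases "H = {}")
      case True then show ?thesis using partition_empty by blast
    next
      case False
      then show ?thesis using partition_single[OF less.prems False] \<open>connected_hg H\<close> by blast
    qed
  next
    case False
    then have ne: "H \<noteq> {}" using connected_empty by blast
    have p1: "hyp_partition H {H}" using partition_single less.prems ne by blast
    then obtain Q where Q: "hyp_partition H Q" "Q \<noteq> {H}"
      using False unfolding connected_hg_def by blast
    have fin: "finite H" using less.prems unfolding hypergraph_def by auto
    have "\<forall>B\<in>Q. \<exists>PB. hyp_partition B PB \<and> (\<forall>C\<in>PB. connected_hg C)"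
    proof
      fix B assume B: "B \<in> Q"
      have BH: "B \<subseteq> H" using block_sub Q(1) B by blast
      have "B \<noteq> H"
      proof
        assume BH': "B = H"
        have "Q = {H}"
        proof
          show "{H} \<subseteq> Q" using B BH' by auto
          show "Q \<subseteq> {H}"
          proof
            fix B' assume B': "B' \<in> Q"
            show "B' \<in> {H}"
            proof (rule ccontr)
              assume "B' \<notin> {H}"
              then have "B' \<noteq> B" using BH' by auto
              then have "B' \<inter> B = {}" using hp_disj[OF Q(1) B' B] by blast
              moreover have "B' \<subseteq> H" using block_sub[OF Q(1) B'] .
              moreover have "B' \<noteq> {}" using hp_ne[OF Q(1) B'] .
              ultimately show False using BH' by blast
            qed
          qed
        qed
        then show False using Q(2) by simp
      qed
      then have "card B < card H" using BH fin by (simp add: psubset_card_mono)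
      moreover have "hypergraph B" using hg_sub less.prems BH by blast
      ultimately show "\<exists>PB. hyp_partition B PB \<and> (\<forall>C\<in>PB. connected_hg C)" using less.hyps by blast
    qed
    then obtain f where f: "\<forall>B\<in>Q. hyp_partition B (f B) \<and> (\<forall>C\<in>f B. connected_hg C)"
      by metis
    define P where "P = (\<Union>B\<in>Q. f B)"
    have "hyp_partition H P"
      unfolding hyp_partition_def
    proof (intro conjI)
      show "\<forall>C\<in>P. C \<noteq> {}"
      proof
        fix C assume "C \<in> P"
        then obtain B where "B \<in> Q" "C \<in> f B" unfolding P_def by blast
        then show "C \<noteq> {}" using f hp_ne by blast
      qed
      show "\<forall>C\<in>P. \<Union>C \<noteq> {}"
      proof
        fix C assume "C \<in> P"
        then obtain B where "B \<in> Q" "C \<in> f B" unfolding P_def by blast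
        then show "\<Union>C \<noteq> {}" using f hp_une by blast
      qed
      have "\<Union>P = (\<Union>B\<in>Q. \<Union>(f B))" unfolding P_def by auto
      also have "\<dots> = (\<Union>B\<in>Q. B)" using f hp_Un by (metis (no_types, lifting) SUP_cong)
      also have "\<dots> = H" using hp_Un[OF Q(1)] by simp
      finally show "\<Union>P = H" .
      show "\<forall>C1\<in>P. \<forall>C2\<in>P. C1 \<noteq> C2 \<longrightarrow> C1 \<inter> C2 = {}"
      proof (intro ballI impI)
        fix C1 C2 assume C: "C1 \<in> P" "C2 \<in> P" "C1 \<noteq> C2"
        then obtain B1 B2 where B: "B1 \<in> Q" "B2 \<in> Q" "C1 \<in> f B1" "C2 \<in> f B2" unfolding P_def by auto
        show "C1 \<inter> C2 = {}"
        proof (cases "B1 = B2")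
          case True
          have "hyp_partition B1 (f B1)" using f B(1) by blast
          then show ?thesis using hp_disj[OF _ B(3) _ C(3)] B(4) True by blast
        next
          case False
          then have "B1 \<inter> B2 = {}" using hp_disj[OF Q(1) B(1,2)] by blast
          moreover have "hyp_partition B1 (f B1)" "hyp_partition B2 (f B2)" using f B(1,2) by blast+
          then have "C1 \<subseteq> B1" "C2 \<subseteq> B2" using block_sub B(3,4) by blast+
          ultimately show ?thesis by blast
        qed
      qed
      show "\<forall>C1\<in>P. \<forall>C2\<in>P. C1 \<noteq> C2 \<longrightarrow> \<Union>C1 \<inter> \<Union>C2 = {}"
      proof (intro ballI impI)
        fix C1 C2 assume C: "C1 \<in> P" "C2 \<in> P" "C1 \<noteq> C2"
        then obtain B1 B2 where B: "B1 \<in> Q" "B2 \<in> Q" "C1 \<in> f B1" "C2 \<in> f B2" unfolding P_def by auto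
        show "\<Union>C1 \<inter> \<Union>C2 = {}"
        proof (cases "B1 = B2")
          case True
          have "hyp_partition B1 (f B1)" using f B(1) by blast
          then show ?thesis using hp_udisj[OF _ B(3) _ C(3)] B(4) True by blast
        next
          case False
          then have "\<Union>B1 \<inter> \<Union>B2 = {}" using hp_udisj[OF Q(1) B(1,2)] by blast
          moreover have "hyp_partition B1 (f B1)" "hyp_partition B2 (f B2)" using f B(1,2) by blast+
          then have "C1 \<subseteq> B1" "C2 \<subseteq> B2" using block_sub B(3,4) by blast+
          ultimately show ?thesis by blast
        qed
      qed
    qed
    moreover have "\<forall>C\<in>P. connected_hg C" using f unfolding P_def by blast
    ultimately show ?thesis by blast
  qed
qed

lemma construction_nested:
  "construction H K \<Longrightarrow> saturated H \<Longrightarrow> K \<subseteq> H \<and> nested H K"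
proof (induction rule: construction.induct)
  case empty
  then show ?case unfolding nested_def antichain_def by auto
next
  case (conn H x K)
  let ?H' = "restr H (\<Union>H - {x})"
  have IH: "K \<subseteq> ?H'" "nested ?H' K" using conn restr_saturated by blast+
  have top: "\<Union>H \<in> H" using conn_top conn by blast
  have KH: "K \<subseteq> H" using IH restr_sub by blast
  have "nested H (insert (\<Union>H) K)"
    unfolding nested_def
  proof (intro allI impI)
    fix S assume S: "antichain (insert (\<Union>H) K) S"
    have "\<Union>H \<notin> S"
    proof
      assume inS: "\<Union>H \<in> S"
      have "S \<subseteq> {\<Union>H}"
      proof
        fix X assume "X \<in> S"
        moreover have "X \<subseteq> \<Union>H" using \<open>X \<in> S\<close> S KH top unfolding antichain_def by blast
        ultimately show "X \<in> {\<Union>H}" using S inS unfolding antichain_def by blast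
      qed
      then have "card S \<le> 1" using card_mono[of "{\<Union>H}" S] by simp
      then show False using S unfolding antichain_def by simp
    qed
    then have "antichain K S" using S unfolding antichain_def by blast
    then have "\<Union>S \<notin> ?H'" using IH(2) unfolding nested_def misses_def by blast
    moreover have "\<Union>S \<subseteq> \<Union>H - {x}" using \<open>antichain K S\<close> IH(1) unfolding antichain_def restr_def by blast
    ultimately show "misses H S" unfolding misses_def restr_def by blast
  qed
  then show ?case using KH top by blast
next
  case (disconn H P f)
  have IH: "\<forall>B\<in>P. f B \<subseteq> B \<and> nested B (f B)"
    using disconn block_saturated by blast
  have sub: "(\<Union>B\<in>P. f B) \<subseteq> H" using IH block_sub disconn(4) by blast
  have ne_mem: "\<forall>X\<in>H. X \<noteq> {}" using disconn(1) unfolding hypergraph_def by auto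
  have "nested H (\<Union>B\<in>P. f B)"
    unfolding nested_def misses_def
  proof (intro allI impI notI)
    fix S assume S: "antichain (\<Union>B\<in>P. f B) S" and US: "\<Union>S \<in> H"
    have fS: "finite S" "2 \<le> card S" using S unfolding antichain_def by (auto intro: card_ge_0_finite)
    then obtain X0 where "X0 \<in> S" by fastforce
    then have "X0 \<in> H" using S sub unfolding antichain_def by blast
    then have "\<Union>S \<noteq> {}" using \<open>X0 \<in> S\<close> ne_mem by blast
    obtain B0 where B0: "B0 \<in> P" "\<Union>S \<in> B0" using US hp_Un[OF disconn(4)] by blast
    have "S \<subseteq> f B0"
    proof
      fix X assume X: "X \<in> S"
      then obtain B where B: "B \<in> P" "X \<in> f B" using S unfolding antichain_def by blast
      have "X \<in> B" using IH B by blast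
      have "X \<in> H" using X S sub unfolding antichain_def by blast
      moreover have "X \<subseteq> \<Union>B0" using X B0 by blast
      ultimately have "X \<in> B0" using block_mem[OF disconn(4) B0(1)] ne_mem by blast
      then have "B = B0" using \<open>X \<in> B\<close> hp_disj[OF disconn(4) B(1) B0(1)] by blast
      then show "X \<in> f B0" using B by simp
    qed
    then have "antichain (f B0) S" using S unfolding antichain_def by blast
    then have "\<Union>S \<notin> B0" using IH B0 unfolding nested_def misses_def by blast
    then show False using B0 by blast
  qed
  then show ?case using sub by blast
qed

lemma construction_exists:
  "hypergraph H \<Longrightarrow> atomic H \<Longrightarrow> saturated H \<Longrightarrow> M \<subseteq> H \<Longrightarrow> nested H M
   \<Longrightarrow> \<exists>K. construction H K \<and> M \<subseteq> K"
proof (induction "card (\<Union>H)" arbitrary: H M rule: less_induct)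
  case less
  note hg = less.prems(1) and at = less.prems(2) and sat = less.prems(3)
    and MH = less.prems(4) and nes = less.prems(5)
  have ne_mem: "\<forall>X\<in>H. X \<noteq> {}" using hg unfolding hypergraph_def by auto
  have finU: "finite (\<Union>H)" using hg_union_finite hg by blast
  show ?case
  proof (cases "H = {}")
    case True
    then show ?thesis using MH construction.empty by blast
  next
    case ne: False
    show ?thesis
    proof (cases "connected_hg H")
      case con: True
      have top: "\<Union>H \<in> H" using conn_top hg at sat con ne by blast
      have Une: "\<Union>H \<noteq> {}" using ne ne_mem by blast
      define M' where "M' = M - {\<Union>H}"
      have finM': "finite M'" using MH hg unfolding M'_def hypergraph_def by (auto intro: finite_subset)
      define Mx where "Mx = {X \<in> M'. \<forall>Y\<in>M'. X \<subseteq> Y \<longrightarrow> X = Y}"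
      have UMx: "\<Union>M' = \<Union>Mx"
      proof
        show "\<Union>M' \<subseteq> \<Union>Mx"
        proof
          fix z assume "z \<in> \<Union>M'"
          then obtain X where X: "X \<in> M'" "z \<in> X" by blast
          then obtain Y where "Y \<in> M'" "X \<subseteq> Y" "\<forall>Z\<in>M'. Y \<subseteq> Z \<longrightarrow> Y = Z"
            using finite_has_maximal2[OF finM'] by blast
          then show "z \<in> \<Union>Mx" using X unfolding Mx_def by blast
        qed
        show "\<Union>Mx \<subseteq> \<Union>M'" unfolding Mx_def by blast
      qed
      have "\<Union>Mx \<noteq> \<Union>H"
      proof (cases "2 \<le> card Mx")
        case True
        then have "antichain M Mx" unfolding antichain_def Mx_def M'_def by blast
        then have "\<Union>Mx \<notin> H" using nes unfolding nested_def misses_def by blast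
        then show ?thesis using top by metis
      next
        case False
        have "finite Mx" using finM' unfolding Mx_def by simp
        then have "Mx = {} \<or> (\<exists>X. Mx = {X})" using False
          by (metis One_nat_def card_1_singletonE card_0_eq less_2_cases not_le)
        then show ?thesis
        proof
          assume "Mx = {}" then show ?thesis using Une by simp
        next
          assume "\<exists>X. Mx = {X}"
          then obtain X where "Mx = {X}" by blast
          moreover then have "X \<in> M'" unfolding Mx_def by blast
          ultimately show ?thesis unfolding M'_def by auto
        qed
      qed
      moreover have "\<Union>M' \<subseteq> \<Union>H" using MH unfolding M'_def by blast
      ultimately obtain x where x: "x \<in> \<Union>H" "x \<notin> \<Union>M'" using UMx by blast
      let ?H' = "restr H (\<Union>H - {x})"
      have M'H': "M' \<subseteq> ?H'" using MH x unfolding M'_def restr_def by blast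
      have nes': "nested ?H' M'"
        unfolding nested_def
      proof (intro allI impI)
        fix S assume "antichain M' S"
        then have "antichain M S" unfolding antichain_def M'_def by blast
        then have "\<Union>S \<notin> H" using nes unfolding nested_def misses_def by blast
        then show "misses ?H' S" unfolding misses_def using restr_sub by blast
      qed
      have "\<Union>?H' \<subseteq> \<Union>H - {x}" unfolding restr_def by blast
      then have "\<Union>?H' \<subset> \<Union>H" using x by blast
      then have "card (\<Union>?H') < card (\<Union>H)" using finU by (simp add: psubset_card_mono)
      moreover have "hypergraph ?H'" using hg_sub hg restr_sub by blast
      ultimately obtain K' where K': "construction ?H' K'" "M' \<subseteq> K'"
        using less.hyps[OF _ _ restr_atomic[OF at] restr_saturated[OF sat] M'H' nes'] by blast
      have "construction H (insert (\<Union>H) K')"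
        using construction.conn[OF hg at Une con x(1) K'(1)] .
      moreover have "M \<subseteq> insert (\<Union>H) K'" using K'(2) unfolding M'_def by blast
      ultimately show ?thesis by blast
    next
      case ncon: False
      from finest_exists[OF hg] obtain P where P: "hyp_partition H P" "\<forall>B\<in>P. connected_hg B"
        by blast
      have "card P \<noteq> 0"
      proof (rule notI)
        assume "card P = 0"
        moreover have "finite P"
        proof -
          have "\<Union>P = H" using P(1) unfolding hyp_partition_def by simp
          then have "P \<subseteq> Pow H" by blast
          moreover have "finite H" using hg unfolding hypergraph_def by blast
          moreover have "finite (Pow H)" using \<open>finite H\<close> by simp
          show ?thesis by (rule finite_subset[OF \<open>P \<subseteq> Pow H\<close> \<open>finite (Pow H)\<close>])
        qed
        ultimately have "P = {}" by simp
        moreover have "\<Union>P = H" using P(1) unfolding hyp_partition_def by simp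
        ultimately show False using ne by simp
      qed
      moreover have "card P \<noteq> 1"
      proof (rule notI)
        assume "card P = 1"
        then obtain B where "P = {B}" using card_1_singletonE by blast
        moreover have "\<Union>P = H" using P(1) unfolding hyp_partition_def by simp
        ultimately have "P = {H}" by simp
        then show False using P(2) ncon by simp
      qed
      ultimately have c2: "2 \<le> card P" by linarith
      have "\<forall>B\<in>P. \<exists>K. construction B K \<and> M \<inter> B \<subseteq> K"
      proof
        fix B assume B: "B \<in> P"
        have BH: "B \<subseteq> H" using block_sub P(1) B by blast
        have "\<not> P \<subseteq> {B}"
        proof
          assume "P \<subseteq> {B}"
          then have "card P \<le> card {B}" by (rule card_mono[rotated]) simp
          then show False using c2 by simp
        qed
        then obtain B' where B': "B' \<in> P" "B' \<noteq> B" by blast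
        have hp: "\<forall>B\<in>P. \<Union>B \<noteq> {}" "\<forall>B1\<in>P. \<forall>B2\<in>P. B1 \<noteq> B2 \<longrightarrow> \<Union>B1 \<inter> \<Union>B2 = {}"
          using P(1) unfolding hyp_partition_def by simp_all
        have "\<Union>B' \<noteq> {}" using hp(1) B' by blast
        moreover have "\<Union>B' \<inter> \<Union>B = {}" using hp(2) B B' by blast
        moreover have "B' \<subseteq> H" using block_sub P(1) B' by blast
        ultimately have "\<Union>B' \<noteq> {}" "\<Union>B' \<inter> \<Union>B = {}" "\<Union>B' \<subseteq> \<Union>H" by blast+
        then have "\<Union>B \<subset> \<Union>H" using BH by blast
        then have "card (\<Union>B) < card (\<Union>H)" using finU by (simp add: psubset_card_mono)
        moreover have "hypergraph B" using hg_sub hg BH by blast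
        moreover have "nested B (M \<inter> B)"
          unfolding nested_def
        proof (intro allI impI)
          fix S assume "antichain (M \<inter> B) S"
          then have "antichain M S" unfolding antichain_def by blast
          then have "\<Union>S \<notin> H" using nes unfolding nested_def misses_def by blast
          then show "misses B S" unfolding misses_def using BH by blast
        qed
        moreover have "M \<inter> B \<subseteq> B" by blast
        ultimately show "\<exists>K. construction B K \<and> M \<inter> B \<subseteq> K"
          using less.hyps[OF _ _ block_atomic[OF P(1) B at] block_saturated[OF P(1) B sat]] by blast
      qed
      then obtain f where f: "\<forall>B\<in>P. construction B (f B) \<and> M \<inter> B \<subseteq> f B" by metis
      have fc: "\<forall>B\<in>P. construction B (f B)" using f by blast
      have "construction H (\<Union>B\<in>P. f B)"
        by (rule construction.disconn[OF hg at ncon P(1) P(2) c2 fc])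
      moreover have "M \<subseteq> (\<Union>B\<in>P. f B)"
      proof
        fix X assume "X \<in> M"
        moreover have "\<Union>P = H" using P(1) unfolding hyp_partition_def by simp
        ultimately obtain B where "B \<in> P" "X \<in> B" using MH by blast
        then show "X \<in> (\<Union>B\<in>P. f B)" using f \<open>X \<in> M\<close> by blast
      qed
      ultimately show ?thesis by blast
    qed
  qed
qed

lemma antichain_mono: "antichain M S \<Longrightarrow> M \<subseteq> K \<Longrightarrow> antichain K S"
  unfolding antichain_def by blast

theorem proposition6p13:
  fixes H M :: "'a set set"
  assumes "hypergraph H" and "H \<noteq> {}" and "ASC H" and "M \<subseteq> H"
  shows "construct H M \<longleftrightarrow> (\<forall>S. antichain M S \<longrightarrow> misses H S) \<and> \<Union>H \<in> M"
proof
  assume c: "construct H M"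
  then obtain K where K: "construction H K" "M \<subseteq> K" unfolding construct_def by blast
  have sat: "saturated H" using assms(3) unfolding ASC_def by blast
  have "K \<subseteq> H \<and> nested H K" by (rule construction_nested[OF K(1) sat])
  then have nK: "nested H K" by (rule conjunct2)
  have "\<forall>S. antichain M S \<longrightarrow> misses H S"
  proof (intro allI impI)
    fix S assume "antichain M S"
    then have "antichain K S" using antichain_mono K(2) by blast
    then show "misses H S" using nK unfolding nested_def by blast
  qed
  moreover have "\<Union>H \<in> M" using c unfolding construct_def by blast
  ultimately show "(\<forall>S. antichain M S \<longrightarrow> misses H S) \<and> \<Union>H \<in> M" by blast
next
  assume r: "(\<forall>S. antichain M S \<longrightarrow> misses H S) \<and> \<Union>H \<in> M"
  have at: "atomic H" and sat: "saturated H" using assms(3) unfolding ASC_def by blast+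
  have "nested H M" using r unfolding nested_def by blast
  then obtain K where "construction H K" "M \<subseteq> K"
    using construction_exists[OF assms(1) at sat assms(4)] by blast
  then show "construct H M" using r unfolding construct_def by blast
qed

end
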